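(* Let $S_3=\langle x,y\mid x^2=e,\ y^2=e,\ (xy)^3=e\rangle$ and $\Delta=\{x,y,z\}$ with $z=xyx$. Then $W=W_xU_x+W_yU_y+W_zU_z$ is a homogeneous scalar quantum walk on $C_\Delta(S_3)$ whenever, for real $\phi_1,\phi_2$, $W_x=\tfrac13(1+e^{i\phi_1}+e^{i\phi_2})$, $W_y=\tfrac13(1+e^{2\pi i/3}e^{i\phi_1}+e^{-2\pi i/3}e^{i\phi_2})$, $W_z=\tfrac13(1+e^{-2\pi i/3}e^{i\phi_1}+e^{2\pi i/3}e^{i\phi_2})$ and these values are nonzero; in particular $C_\Delta(S_3)$ admits a homogeneous scalar quantum walk.
   Context: The Cayley graph $C_\Delta(\Gamma)$ has vertex set $\Gamma$ and directed edges $(g,g\delta)$, $g\in\Gamma,\delta\in\Delta$. Let $\ell^2(\Gamma)$ have orthonormal basis $\{|g\rangle\}_{g\in\Gamma}$ and for $\delta\in\Gamma$ let $U_\delta|g\rangle=|g\delta\rangle$. A homogeneous scalar quantum walk on $C_\Delta(\Gamma)$ is a unitary operator $W=\sum_{\delta\in\Delta}W_\delta U_\delta$ with all complex coefficients $W_\delta$ nonzero. *)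

theory Defs
  imports Complex_Main "HOL-Algebra.Sym_Groups"
begin

text \<open>Finite groups only: ell^2 of a finite group is the space of all complex
  functions on its carrier (extended by 0 outside the carrier).\<close>

definition l2 :: "('g, 'b) monoid_scheme \<Rightarrow> ('g \<Rightarrow> complex) set" where
  "l2 G = {\<psi>. \<forall>g. g \<notin> carrier G \<longrightarrow> \<psi> g = 0}"

definition l2_inner :: "('g, 'b) monoid_scheme \<Rightarrow> ('g \<Rightarrow> complex) \<Rightarrow> ('g \<Rightarrow> complex) \<Rightarrow> complex" where
  "l2_inner G \<psi> \<phi> = (\<Sum>g\<in>carrier G. cnj (\<psi> g) * \<phi> g)"

text \<open>Right translation U_d with U_d |g> = |g d>, i.e. (U_d psi)(h) = psi(h d^-1).\<close>
definition shift_op :: "('g, 'b) monoid_scheme \<Rightarrow> 'g \<Rightarrow> ('g \<Rightarrow> complex) \<Rightarrow> ('g \<Rightarrow> complex)" where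
  "shift_op G d \<psi> = (\<lambda>h. if h \<in> carrier G then \<psi> (h \<otimes>\<^bsub>G\<^esub> inv\<^bsub>G\<^esub> d) else 0)"

definition walk_op :: "('g, 'b) monoid_scheme \<Rightarrow> 'g set \<Rightarrow> ('g \<Rightarrow> complex) \<Rightarrow> ('g \<Rightarrow> complex) \<Rightarrow> ('g \<Rightarrow> complex)" where
  "walk_op G \<Delta> c \<psi> = (\<lambda>h. \<Sum>d\<in>\<Delta>. c d * shift_op G d \<psi> h)"

definition unitary_on :: "('g, 'b) monoid_scheme \<Rightarrow> (('g \<Rightarrow> complex) \<Rightarrow> ('g \<Rightarrow> complex)) \<Rightarrow> bool" where
  "unitary_on G T \<longleftrightarrow> bij_betw T (l2 G) (l2 G) \<and>
     (\<forall>\<psi>\<in>l2 G. \<forall>\<phi>\<in>l2 G. l2_inner G (T \<psi>) (T \<phi>) = l2_inner G \<psi> \<phi>)"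

definition hom_scalar_qw :: "('g, 'b) monoid_scheme \<Rightarrow> 'g set \<Rightarrow> ('g \<Rightarrow> complex) \<Rightarrow> bool" where
  "hom_scalar_qw G \<Delta> c \<longleftrightarrow> \<Delta> \<subseteq> carrier G \<and> (\<forall>d\<in>\<Delta>. c d \<noteq> 0) \<and> unitary_on G (walk_op G \<Delta> c)"

end

theory Submission
  imports Defs
begin


lemma unitary_by_inverse:
  assumes "\<And>\<psi>. \<psi> \<in> l2 G \<Longrightarrow> T \<psi> \<in> l2 G" "\<And>\<psi>. \<psi> \<in> l2 G \<Longrightarrow> V \<psi> \<in> l2 G"
    "\<And>\<psi>. \<psi> \<in> l2 G \<Longrightarrow> V (T \<psi>) = \<psi>" "\<And>\<psi>. \<psi> \<in> l2 G \<Longrightarrow> T (V \<psi>) = \<psi>"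
    "\<And>\<psi> \<phi>. \<psi> \<in> l2 G \<Longrightarrow> \<phi> \<in> l2 G \<Longrightarrow> l2_inner G (T \<psi>) \<phi> = l2_inner G \<psi> (V \<phi>)"
  shows "unitary_on G T"
  unfolding unitary_on_def
proof
  show "bij_betw T (l2 G) (l2 G)"
    by (rule bij_betw_byWitness[where f'=V]) (use assms in auto)
  show "\<forall>\<psi>\<in>l2 G. \<forall>\<phi>\<in>l2 G. l2_inner G (T \<psi>) (T \<phi>) = l2_inner G \<psi> \<phi>"
    using assms by simp
qed

lemma walk_l2: "walk_op G D c \<psi> \<in> l2 G"
  unfolding l2_def walk_op_def shift_op_def by simp

lemma walk3:
  assumes "distinct [x,y,z]"
  shows "walk_op G {x,y,z} c \<psi> h = (if h \<in> carrier G then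
     c x * \<psi> (h \<otimes>\<^bsub>G\<^esub> inv\<^bsub>G\<^esub> x) + c y * \<psi> (h \<otimes>\<^bsub>G\<^esub> inv\<^bsub>G\<^esub> y) + c z * \<psi> (h \<otimes>\<^bsub>G\<^esub> inv\<^bsub>G\<^esub> z) else 0)"
  using assms unfolding walk_op_def shift_op_def by (auto simp: algebra_simps)

lemma (in group) reindex_inv:
  assumes "d \<in> carrier G" "d \<otimes> d = \<one>"
  shows "(\<Sum>g\<in>carrier G. f (g \<otimes> d)) = (\<Sum>g\<in>carrier G. f g)"
proof -
  have "bij_betw (\<lambda>g. g \<otimes> d) (carrier G) (carrier G)"
  proof (rule bij_betw_byWitness[where f'="\<lambda>g. g \<otimes> d"])
    show "\<forall>a\<in>carrier G. a \<otimes> d \<otimes> d = a" using assms by (simp add: m_assoc)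
  qed (use assms in \<open>auto simp: m_assoc\<close>)
  then show ?thesis by (rule sum.reindex_bij_betw)
qed

lemma (in group) inv_invol: "d \<in> carrier G \<Longrightarrow> d \<otimes> d = \<one> \<Longrightarrow> inv d = d"
  using inv_equality by blast

lemma (in group) walk_unitary3:
  assumes dist: "distinct [x,y,z]" and car: "x \<in> carrier G" "y \<in> carrier G" "z \<in> carrier G"
    and inv: "x \<otimes> x = \<one>" "y \<otimes> y = \<one>" "z \<otimes> z = \<one>"
    and rel: "x \<otimes> y = y \<otimes> z" "z \<otimes> x = y \<otimes> z"
    and N: "cnj (c x) * c x + cnj (c y) * c y + cnj (c z) * c z = 1"
    and P: "cnj (c x) * c y + cnj (c y) * c z + cnj (c z) * c x = 0"
  shows "unitary_on G (walk_op G {x,y,z} c)"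
proof -
  have ix: "inv x = x" and iy: "inv y = y" and iz: "inv z = z" using inv car inv_invol by auto
  define V where "V = walk_op G {x,y,z} (cnj \<circ> c)"
  have rel2: "y \<otimes> x = z \<otimes> y" "x \<otimes> z = z \<otimes> y"
  proof -
    have "inv (x \<otimes> y) = inv (y \<otimes> z)" "inv (z \<otimes> x) = inv (y \<otimes> z)" using rel by auto
    then show "y \<otimes> x = z \<otimes> y" "x \<otimes> z = z \<otimes> y"
      using car by (simp_all add: inv_mult_group ix iy iz)
  qed
  have Q: "c x * cnj (c y) + c y * cnj (c z) + c z * cnj (c x) = 0"
  proof -
    have "cnj (cnj (c x) * c y + cnj (c y) * c z + cnj (c z) * c x) = 0" using P by simp
    then show ?thesis by (simp add: algebra_simps)
  qed
  have W: "walk_op G {x,y,z} cc \<psi> h = (if h \<in> carrier G then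
     cc x * \<psi> (h \<otimes> x) + cc y * \<psi> (h \<otimes> y) + cc z * \<psi> (h \<otimes> z) else 0)" for cc \<psi> h
    by (simp only: walk3[OF dist, of G cc \<psi> h] ix iy iz)
  have key: "walk_op G {x,y,z} a (walk_op G {x,y,z} b \<psi>) = \<psi>"
    if "\<psi> \<in> l2 G" and "a x * b x + a y * b y + a z * b z = 1"
      and "a x * b y + a y * b z + a z * b x = 0" and "a y * b x + a z * b y + a x * b z = 0"
    for a b \<psi>
  proof
    fix h
    show "walk_op G {x,y,z} a (walk_op G {x,y,z} b \<psi>) h = \<psi> h"
    proof (cases "h \<in> carrier G")
      case False then show ?thesis using that(1) by (simp add: W l2_def)
    next
      case True
      have e: "h \<otimes> d \<otimes> d = h" if "d \<in> {x,y,z}" for d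
        using that True car inv by (auto simp: m_assoc)
      have f: "h \<otimes> x \<otimes> y = h \<otimes> (x \<otimes> y)" "h \<otimes> y \<otimes> z = h \<otimes> (x \<otimes> y)" "h \<otimes> z \<otimes> x = h \<otimes> (x \<otimes> y)"
        "h \<otimes> y \<otimes> x = h \<otimes> (y \<otimes> x)" "h \<otimes> z \<otimes> y = h \<otimes> (y \<otimes> x)" "h \<otimes> x \<otimes> z = h \<otimes> (y \<otimes> x)"
        using True car rel rel2 by (auto simp: m_assoc)
      have "walk_op G {x,y,z} a (walk_op G {x,y,z} b \<psi>) h =
        (a x * b x + a y * b y + a z * b z) * \<psi> h + (a x * b y + a y * b z + a z * b x) * \<psi> (h \<otimes> (x \<otimes> y))
        + (a y * b x + a z * b y + a x * b z) * \<psi> (h \<otimes> (y \<otimes> x))"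
        using True car e f by (simp add: W algebra_simps)
      then show ?thesis using that by simp
    qed
  qed
  show ?thesis
  proof (rule unitary_by_inverse[where V=V])
    fix \<psi> assume "\<psi> \<in> l2 G"
    show "V (walk_op G {x, y, z} c \<psi>) = \<psi>" unfolding V_def
      by (rule key) (use \<open>\<psi> \<in> l2 G\<close> N P Q in \<open>auto simp: algebra_simps\<close>)
    show "walk_op G {x, y, z} c (V \<psi>) = \<psi>" unfolding V_def
      by (rule key) (use \<open>\<psi> \<in> l2 G\<close> N P Q in \<open>auto simp: algebra_simps\<close>)
  next
    fix \<psi> \<phi> assume "\<psi> \<in> l2 G" "\<phi> \<in> l2 G"
    have s: "(\<Sum>g\<in>carrier G. cnj (\<psi> (g \<otimes> d)) * \<phi> g) = (\<Sum>g\<in>carrier G. cnj (\<psi> g) * \<phi> (g \<otimes> d))"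
      if "d \<in> {x,y,z}" for d
    proof -
      have dc: "d \<in> carrier G" "d \<otimes> d = \<one>" using that car inv by auto
      have "(\<Sum>g\<in>carrier G. cnj (\<psi> g) * \<phi> (g \<otimes> d)) = (\<Sum>g\<in>carrier G. cnj (\<psi> (g \<otimes> d)) * \<phi> (g \<otimes> d \<otimes> d))"
        by (rule reindex_inv[OF dc, symmetric, where f="\<lambda>g. cnj (\<psi> g) * \<phi> (g \<otimes> d)"])
      also have "\<dots> = (\<Sum>g\<in>carrier G. cnj (\<psi> (g \<otimes> d)) * \<phi> g)"
        using dc by (intro sum.cong) (auto simp: m_assoc)
      finally show ?thesis by simp
    qed
    have "l2_inner G (walk_op G {x, y, z} c \<psi>) \<phi> =
      (\<Sum>g\<in>carrier G. cnj (c x) * (cnj (\<psi> (g \<otimes> x)) * \<phi> g) + cnj (c y) * (cnj (\<psi> (g \<otimes> y)) * \<phi> g)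
         + cnj (c z) * (cnj (\<psi> (g \<otimes> z)) * \<phi> g))"
      unfolding l2_inner_def by (intro sum.cong) (auto simp: W algebra_simps)
    also have "\<dots> = cnj (c x) * (\<Sum>g\<in>carrier G. cnj (\<psi> (g \<otimes> x)) * \<phi> g) + cnj (c y) * (\<Sum>g\<in>carrier G. cnj (\<psi> (g \<otimes> y)) * \<phi> g)
         + cnj (c z) * (\<Sum>g\<in>carrier G. cnj (\<psi> (g \<otimes> z)) * \<phi> g)"
      by (simp only: sum.distrib sum_distrib_left)
    also have "\<dots> = cnj (c x) * (\<Sum>g\<in>carrier G. cnj (\<psi> g) * \<phi> (g \<otimes> x)) + cnj (c y) * (\<Sum>g\<in>carrier G. cnj (\<psi> g) * \<phi> (g \<otimes> y))
         + cnj (c z) * (\<Sum>g\<in>carrier G. cnj (\<psi> g) * \<phi> (g \<otimes> z))"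
      using s[of x] s[of y] s[of z] by simp
    also have "\<dots> = (\<Sum>g\<in>carrier G. cnj (c x) * (cnj (\<psi> g) * \<phi> (g \<otimes> x)) + cnj (c y) * (cnj (\<psi> g) * \<phi> (g \<otimes> y))
         + cnj (c z) * (cnj (\<psi> g) * \<phi> (g \<otimes> z)))"
      by (simp only: sum.distrib sum_distrib_left)
    also have "\<dots> = l2_inner G \<psi> (V \<phi>)"
      unfolding l2_inner_def V_def by (intro sum.cong) (auto simp: W algebra_simps)
    finally show "l2_inner G (walk_op G {x, y, z} c \<psi>) \<phi> = l2_inner G \<psi> (V \<phi>)" .
  qed (simp_all add: walk_l2 V_def)
qed


lemma exp_i_cnj: "cnj (exp (\<i> * complex_of_real t)) = exp (-(\<i> * complex_of_real t))"
  using cis_cnj[of t] by (simp add: cis_conv_exp)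
lemma exp_i_unit: "exp (\<i> * complex_of_real t) * cnj (exp (\<i> * complex_of_real t)) = 1"
  by (simp add: exp_i_cnj flip: exp_add)
lemma omega:
  defines "w \<equiv> exp (2 * pi * \<i> / 3)"
  shows "1 + w + w^2 = 0" "exp (- 2 * pi * \<i> / 3) = w^2" "cnj w = w^2"
proof -
  have w3: "w^3 = 1"
  proof -
    have "w^3 = exp (of_nat 3 * (2 * pi * \<i> / 3))" unfolding w_def by (rule exp_of_nat_mult[symmetric])
    also have "\<dots> = exp (2 * of_real pi * \<i>)" by (simp add: field_simps)
    finally show ?thesis by (simp only: exp_two_pi_i)
  qed
  have "Re w = cos (2 * pi / 3)" unfolding w_def by (simp add: Re_exp)
  then have "w \<noteq> 1" by (auto simp: cos_120)
  moreover have "(w - 1) * (1 + w + w^2) = 0" using w3 by (simp add: algebra_simps power3_eq_cube power2_eq_square)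
  ultimately show s: "1 + w + w^2 = 0" by simp
  have "w * exp (- 2 * pi * \<i> / 3) = 1" unfolding w_def by (simp flip: exp_add)
  then have "exp (- 2 * pi * \<i> / 3) = w^3 * exp (- 2 * pi * \<i> / 3)" using w3 by simp
  also have "\<dots> = w^2" using \<open>w * exp (- 2 * pi * \<i> / 3) = 1\<close> by (simp add: power3_eq_cube power2_eq_square algebra_simps)
  finally show e: "exp (- 2 * pi * \<i> / 3) = w^2" .
  have "cnj w = exp (- 2 * pi * \<i> / 3)" unfolding w_def
    using exp_i_cnj[of "2*pi/3"] by (simp add: field_simps)
  then show "cnj w = w^2" using e by simp
qed

lemma div9: "p1*q1 + p2*q2 + p3*q3 = 9 \<Longrightarrow> p1/3*(q1/3) + p2/3*(q2/3) + p3/3*(q3/3) = (1::complex)"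
  "p1*q1 + p2*q2 + p3*q3 = 0 \<Longrightarrow> p1/3*(q1/3) + p2/3*(q2/3) + p3/3*(q3/3) = (0::complex)"
  by (simp_all add: field_simps)

lemma coeff:
  fixes w a b cx cy cz :: complex
  assumes "1+w+w^2=0" "a * cnj a = 1" "b * cnj b = 1" "cnj w = w^2"
    and "cx = (1+a+b)/3" "cy = (1 + w*a + w^2*b)/3" "cz = (1 + w^2*a + w*b)/3"
  shows "cnj cx * cx + cnj cy * cy + cnj cz * cz = 1"
    "cnj cx * cy + cnj cy * cz + cnj cz * cx = 0"
proof -
  have c: "cnj cx = (1 + cnj a + cnj b)/3" "cnj cy = (1 + w^2 * cnj a + w^4 * cnj b)/3"
     "cnj cz = (1 + w^4 * cnj a + w^2 * cnj b)/3"
    unfolding assms(5-7) by (simp_all add: assms(4) flip: power_mult)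
  show "cnj cx * cx + cnj cy * cy + cnj cz * cz = 1"
    unfolding c unfolding assms(5-7) by (rule div9) (use assms(1-3) in algebra)
  show "cnj cx * cy + cnj cy * cz + cnj cz * cx = 0"
    unfolding c unfolding assms(5-7) by (rule div9) (use assms(1-3) in algebra)
qed

lemma s3facts:
  defines "S3 \<equiv> sym_group 3"
      and "x \<equiv> transpose (1::nat) 2"
      and "y \<equiv> transpose (2::nat) 3"
  defines "z \<equiv> x \<otimes>\<^bsub>S3\<^esub> y \<otimes>\<^bsub>S3\<^esub> x"
  shows "distinct [x,y,z]" "x \<in> carrier S3" "y \<in> carrier S3" "z \<in> carrier S3"
    "x \<otimes>\<^bsub>S3\<^esub> x = \<one>\<^bsub>S3\<^esub>" "y \<otimes>\<^bsub>S3\<^esub> y = \<one>\<^bsub>S3\<^esub>" "z \<otimes>\<^bsub>S3\<^esub> z = \<one>\<^bsub>S3\<^esub>"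
    "x \<otimes>\<^bsub>S3\<^esub> y = y \<otimes>\<^bsub>S3\<^esub> z" "z \<otimes>\<^bsub>S3\<^esub> x = y \<otimes>\<^bsub>S3\<^esub> z"
proof -
  have z: "z = transpose 1 3" unfolding z_def S3_def x_def y_def sym_group_mult
    by (rule ext) (simp add: transpose_def)
  show "distinct [x,y,z]" unfolding z x_def y_def
    by (auto dest!: fun_cong[where x=1] simp: transpose_def)
  show "x \<in> carrier S3" "y \<in> carrier S3" "z \<in> carrier S3" unfolding z x_def y_def S3_def sym_group_carrier
    by (auto intro!: permutes_swap_id)
  show "x \<otimes>\<^bsub>S3\<^esub> x = \<one>\<^bsub>S3\<^esub>" "y \<otimes>\<^bsub>S3\<^esub> y = \<one>\<^bsub>S3\<^esub>" "z \<otimes>\<^bsub>S3\<^esub> z = \<one>\<^bsub>S3\<^esub>"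
    "x \<otimes>\<^bsub>S3\<^esub> y = y \<otimes>\<^bsub>S3\<^esub> z" "z \<otimes>\<^bsub>S3\<^esub> x = y \<otimes>\<^bsub>S3\<^esub> z"
    unfolding z x_def y_def S3_def sym_group_mult sym_group_one
    by (rule ext; simp add: transpose_def)+
qed
theorem mainTheorem8:
  fixes \<phi>1 \<phi>2 :: real and c :: "(nat \<Rightarrow> nat) \<Rightarrow> complex"
  defines "S3 \<equiv> sym_group 3"
      and "x \<equiv> transpose (1::nat) 2"
      and "y \<equiv> transpose (2::nat) 3"
  defines "z \<equiv> x \<otimes>\<^bsub>S3\<^esub> y \<otimes>\<^bsub>S3\<^esub> x"
  assumes "c x = (1 + exp (\<i> * \<phi>1) + exp (\<i> * \<phi>2)) / 3"
      and "c y = (1 + exp (2 * pi * \<i> / 3) * exp (\<i> * \<phi>1) + exp (- 2 * pi * \<i> / 3) * exp (\<i> * \<phi>2)) / 3"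
      and "c z = (1 + exp (- 2 * pi * \<i> / 3) * exp (\<i> * \<phi>1) + exp (2 * pi * \<i> / 3) * exp (\<i> * \<phi>2)) / 3"
      and "c x \<noteq> 0" and "c y \<noteq> 0" and "c z \<noteq> 0"
  shows "hom_scalar_qw S3 {x, y, z} c \<and> (\<exists>c'. hom_scalar_qw S3 {x, y, z} c')"
proof -
  note F = s3facts[folded S3_def x_def y_def, folded z_def]
  interpret group S3 unfolding S3_def by (rule sym_group_is_group)
  define w where "w = exp (2 * pi * \<i> / 3)"
  note om = omega[folded w_def]
  have e: "exp (2 * pi * \<i> / 3) = w" by (simp add: w_def)
  have cx: "c x = (1 + exp (\<i> * \<phi>1) + exp (\<i> * \<phi>2)) / 3" using assms(5) by simp
  have cy: "c y = (1 + w * exp (\<i> * \<phi>1) + w^2 * exp (\<i> * \<phi>2)) / 3"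
    using assms(6) unfolding e om(2) .
  have cz: "c z = (1 + w^2 * exp (\<i> * \<phi>1) + w * exp (\<i> * \<phi>2)) / 3"
    using assms(7) unfolding e om(2) .
  note cf = coeff[OF om(1) exp_i_unit exp_i_unit om(3) cx cy cz]
  have H: "hom_scalar_qw S3 {x, y, z} c"
    unfolding hom_scalar_qw_def
    using F assms(8-10) walk_unitary3[OF F(1-9) cf] by auto
  then show ?thesis by blast
qed

end
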